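(* Let $G_3$ be the graph with vertices $v_1,\dots,v_8$ and edges $a_1=v_1v_2$, $a_2=v_2v_3$, $a_3=v_3v_4$, $a_4=v_4v_5$, $a_5=v_1v_5$, $a_6=v_1v_8$, $a_7=v_2v_6$, $a_8=v_3v_6$, $a_9=v_4v_7$, $a_{10}=v_5v_8$, $a_{11}=v_6v_7$, $a_{12}=v_7v_8$. Let $\gamma_1=e_1+e_3+e_{10}+e_{11}$, $\gamma_2=e_2+e_4+e_6+e_{11}$, $\gamma_3=e_3+e_5+e_7+e_{12}$, $\gamma_4=e_2+e_5+e_6+e_7+e_8+2e_9+e_{10}$, $\gamma_5=e_2+e_3+e_5+e_6+e_7+e_9+e_{10}+e_{11}$ in $\mathbb{R}^{12}$. Then any $\gamma\in S_{\mathbb{R}}(G_3)$ can be uniquely written as $\gamma=k_1\gamma_1+k_2\gamma_2+k_3\gamma_3+k_4\gamma_4+k_5\gamma_5$ with $k_1,\dots,k_5\in\mathbb{R}$. Moreover, $\gamma\in S(G_3)$ if and only if each of the numbers $k_1,\ k_2,\ k_3,\ k_4,\ k_1+k_2+k_5,\ k_1+k_3+k_5,\ k_1+k_4+k_5,\ k_2+k_4+k_5,\ k_3+k_4+k_5,\ 2k_4+k_5$ belongs to $\mathbb{N}$. Consequently, for $\gamma\in S(G_3)$ one has $k_5\in\mathbb{Z}$.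
   Context: For a finite graph $G$ with edges $a_1,\dots,a_n$, $S_{\mathbb{R}}(G)$ is the set of vectors $(\alpha_1,\dots,\alpha_n)\in\mathbb{R}^n$ (real labels $\alpha_i$ on edges $a_i$) such that for every vertex $v$ the sum of the labels of the edges incident to $v$ is the same number $s$ for all vertices; it is a real vector space. A magic labelling is an element of $S(G)=S_{\mathbb{R}}(G)\cap\mathbb{N}^n$. $e_i$ is the $i$-th unit vector of $\mathbb{R}^n$, $\mathbb{N}=\{0,1,2,\dots\}$. *)

theory Defs
  imports Complex_Main "HOL-Library.Function_Algebras"
begin

text \<open>A finite graph with edges a_1..a_n is given by its vertex set V and the map
  ends i = set of endpoints of edge a_i (i in 1..n). Vectors of R^n are
  functions nat => real vanishing outside {1..n}.\<close>

definition S_R :: "nat set \<Rightarrow> nat \<Rightarrow> (nat \<Rightarrow> nat set) \<Rightarrow> (nat \<Rightarrow> real) set" where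
  "S_R V n ends = {\<alpha>. (\<forall>i. i \<notin> {1..n} \<longrightarrow> \<alpha> i = 0) \<and>
     (\<exists>s. \<forall>v\<in>V. (\<Sum>i\<in>{i\<in>{1..n}. v \<in> ends i}. \<alpha> i) = s)}"

definition S_N :: "nat set \<Rightarrow> nat \<Rightarrow> (nat \<Rightarrow> nat set) \<Rightarrow> (nat \<Rightarrow> real) set" where
  "S_N V n ends = S_R V n ends \<inter> {\<alpha>. \<forall>i\<in>{1..n}. \<alpha> i \<in> \<nat>}"

definition unitv :: "nat \<Rightarrow> nat \<Rightarrow> real" ("e") where
  "unitv i = (\<lambda>j. if j = i then 1 else 0)"

definition G3V :: "nat set" where "G3V = {1..8}"

definition G3ends :: "nat \<Rightarrow> nat set" where
  "G3ends i = (if i = 1 then {1,2} else if i = 2 then {2,3} else if i = 3 then {3,4}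
    else if i = 4 then {4,5} else if i = 5 then {1,5} else if i = 6 then {1,8}
    else if i = 7 then {2,6} else if i = 8 then {3,6} else if i = 9 then {4,7}
    else if i = 10 then {5,8} else if i = 11 then {6,7} else if i = 12 then {7,8} else {})"

definition gam1 :: "nat \<Rightarrow> real" where "gam1 = e 1 + e 3 + e 10 + e 11"
definition gam2 :: "nat \<Rightarrow> real" where "gam2 = e 2 + e 4 + e 6 + e 11"
definition gam3 :: "nat \<Rightarrow> real" where "gam3 = e 3 + e 5 + e 7 + e 12"
definition gam4 :: "nat \<Rightarrow> real" where
  "gam4 = e 2 + e 5 + e 6 + e 7 + e 8 + (\<lambda>j. 2 * e 9 j) + e 10"
definition gam5 :: "nat \<Rightarrow> real" where
  "gam5 = e 2 + e 3 + e 5 + e 6 + e 7 + e 9 + e 10 + e 11"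

definition comb :: "real \<Rightarrow> real \<Rightarrow> real \<Rightarrow> real \<Rightarrow> real \<Rightarrow> nat \<Rightarrow> real" where
  "comb k1 k2 k3 k4 k5 = (\<lambda>j. k1 * gam1 j + k2 * gam2 j + k3 * gam3 j + k4 * gam4 j + k5 * gam5 j)"

end

theory Submission
  imports Defs
begin

lemma I12: "{1..12::nat} = {1,2,3,4,5,6,7,8,9,10,11,12}" by (rule set_eqI) (simp, presburger)

lemma V8: "G3V = {1,2,3,4,5,6,7,8}" unfolding G3V_def by auto

lemma inc:
  "{i\<in>{1..12}. 1 \<in> G3ends i} = {1,5,6}"
  "{i\<in>{1..12}. 2 \<in> G3ends i} = {1,2,7}"
  "{i\<in>{1..12}. 3 \<in> G3ends i} = {2,3,8}"
  "{i\<in>{1..12}. 4 \<in> G3ends i} = {3,4,9}"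
  "{i\<in>{1..12}. 5 \<in> G3ends i} = {4,5,10}"
  "{i\<in>{1..12}. 6 \<in> G3ends i} = {7,8,11}"
  "{i\<in>{1..12}. 7 \<in> G3ends i} = {9,11,12}"
  "{i\<in>{1..12}. 8 \<in> G3ends i} = {6,10,12}"
  unfolding I12 by (auto simp: G3ends_def)

lemma sums:
  "sum (\<alpha>::nat\<Rightarrow>real) {1,5,6} = \<alpha> 1 + (\<alpha> 5 + \<alpha> 6)"
  "sum (\<alpha>::nat\<Rightarrow>real) {1,2,7} = \<alpha> 1 + (\<alpha> 2 + \<alpha> 7)"
  "sum (\<alpha>::nat\<Rightarrow>real) {2,3,8} = \<alpha> 2 + (\<alpha> 3 + \<alpha> 8)"
  "sum (\<alpha>::nat\<Rightarrow>real) {3,4,9} = \<alpha> 3 + (\<alpha> 4 + \<alpha> 9)"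
  "sum (\<alpha>::nat\<Rightarrow>real) {4,5,10} = \<alpha> 4 + (\<alpha> 5 + \<alpha> 10)"
  "sum (\<alpha>::nat\<Rightarrow>real) {7,8,11} = \<alpha> 7 + (\<alpha> 8 + \<alpha> 11)"
  "sum (\<alpha>::nat\<Rightarrow>real) {9,11,12} = \<alpha> 9 + (\<alpha> 11 + \<alpha> 12)"
  "sum (\<alpha>::nat\<Rightarrow>real) {6,10,12} = \<alpha> 6 + (\<alpha> 10 + \<alpha> 12)"
  by simp_all

lemma SR_iff: "\<alpha> \<in> S_R G3V 12 G3ends \<longleftrightarrow> (\<forall>i. i \<notin> {1..12} \<longrightarrow> \<alpha> i = 0) \<and>
   \<alpha> 1 + \<alpha> 5 + \<alpha> 6 = \<alpha> 1 + \<alpha> 2 + \<alpha> 7 \<and>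
   \<alpha> 1 + \<alpha> 5 + \<alpha> 6 = \<alpha> 2 + \<alpha> 3 + \<alpha> 8 \<and>
   \<alpha> 1 + \<alpha> 5 + \<alpha> 6 = \<alpha> 3 + \<alpha> 4 + \<alpha> 9 \<and>
   \<alpha> 1 + \<alpha> 5 + \<alpha> 6 = \<alpha> 4 + \<alpha> 5 + \<alpha> 10 \<and>
   \<alpha> 1 + \<alpha> 5 + \<alpha> 6 = \<alpha> 7 + \<alpha> 8 + \<alpha> 11 \<and>
   \<alpha> 1 + \<alpha> 5 + \<alpha> 6 = \<alpha> 9 + \<alpha> 11 + \<alpha> 12 \<and>
   \<alpha> 1 + \<alpha> 5 + \<alpha> 6 = \<alpha> 6 + \<alpha> 10 + \<alpha> 12"
proof -
  have E: "\<alpha> \<in> S_R G3V 12 G3ends \<longleftrightarrow> (\<forall>i. i \<notin> {1..12} \<longrightarrow> \<alpha> i = 0) \<and>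
   (\<exists>s. \<alpha> 1 + \<alpha> 5 + \<alpha> 6 = s \<and> \<alpha> 1 + \<alpha> 2 + \<alpha> 7 = s \<and> \<alpha> 2 + \<alpha> 3 + \<alpha> 8 = s \<and>
    \<alpha> 3 + \<alpha> 4 + \<alpha> 9 = s \<and> \<alpha> 4 + \<alpha> 5 + \<alpha> 10 = s \<and> \<alpha> 7 + \<alpha> 8 + \<alpha> 11 = s \<and>
    \<alpha> 9 + \<alpha> 11 + \<alpha> 12 = s \<and> \<alpha> 6 + \<alpha> 10 + \<alpha> 12 = s)"
    unfolding S_R_def V8 by (simp only: mem_Collect_eq ball_simps inc sums sum.insert finite.intros
       insert_iff singleton_iff empty_iff simp_thms sum.empty add.assoc
       add_0_right)
  show ?thesis unfolding E by auto
qed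

lemma comb_val: "comb k1 k2 k3 k4 k5 j = (if j = 1 then k1 else if j = 2 then k2+k4+k5
  else if j = 3 then k1+k3+k5 else if j = 4 then k2 else if j = 5 then k3+k4+k5
  else if j = 6 then k2+k4+k5 else if j = 7 then k3+k4+k5 else if j = 8 then k4
  else if j = 9 then 2*k4+k5 else if j = 10 then k1+k4+k5 else if j = 11 then k1+k2+k5
  else if j = 12 then k3 else 0)"
  by (simp add: comb_def gam1_def gam2_def gam3_def gam4_def gam5_def unitv_def plus_fun_def)

lemma comb_SR: "comb k1 k2 k3 k4 k5 \<in> S_R G3V 12 G3ends"
  unfolding SR_iff comb_val by auto

theorem mainTheorem5:
  shows "(\<forall>\<gamma>\<in>S_R G3V 12 G3ends. \<exists>k1 k2 k3 k4 k5. \<gamma> = comb k1 k2 k3 k4 k5 \<and>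
            (\<forall>l1 l2 l3 l4 l5. \<gamma> = comb l1 l2 l3 l4 l5 \<longrightarrow>
               l1 = k1 \<and> l2 = k2 \<and> l3 = k3 \<and> l4 = k4 \<and> l5 = k5))
   \<and> (\<forall>\<gamma>\<in>S_R G3V 12 G3ends. \<forall>k1 k2 k3 k4 k5. \<gamma> = comb k1 k2 k3 k4 k5 \<longrightarrow>
        (\<gamma> \<in> S_N G3V 12 G3ends \<longleftrightarrow>
          k1 \<in> \<nat> \<and> k2 \<in> \<nat> \<and> k3 \<in> \<nat> \<and> k4 \<in> \<nat> \<and> k1 + k2 + k5 \<in> \<nat> \<and>
          k1 + k3 + k5 \<in> \<nat> \<and> k1 + k4 + k5 \<in> \<nat> \<and> k2 + k4 + k5 \<in> \<nat> \<and>
          k3 + k4 + k5 \<in> \<nat> \<and> 2 * k4 + k5 \<in> \<nat>))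
   \<and> (\<forall>\<gamma>\<in>S_N G3V 12 G3ends. \<forall>k1 k2 k3 k4 k5. \<gamma> = comb k1 k2 k3 k4 k5 \<longrightarrow> k5 \<in> \<int>)"
proof (intro conjI ballI allI impI)
  fix \<gamma> assume g: "\<gamma> \<in> S_R G3V 12 G3ends"
  have h0: "\<forall>i. i \<notin> {1..12} \<longrightarrow> \<gamma> i = 0" and
   h1: "\<gamma> 1 + \<gamma> 5 + \<gamma> 6 = \<gamma> 1 + \<gamma> 2 + \<gamma> 7" and
   h2: "\<gamma> 1 + \<gamma> 5 + \<gamma> 6 = \<gamma> 2 + \<gamma> 3 + \<gamma> 8" and
   h3: "\<gamma> 1 + \<gamma> 5 + \<gamma> 6 = \<gamma> 3 + \<gamma> 4 + \<gamma> 9" and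
   h4: "\<gamma> 1 + \<gamma> 5 + \<gamma> 6 = \<gamma> 4 + \<gamma> 5 + \<gamma> 10" and
   h5: "\<gamma> 1 + \<gamma> 5 + \<gamma> 6 = \<gamma> 7 + \<gamma> 8 + \<gamma> 11" and
   h6: "\<gamma> 1 + \<gamma> 5 + \<gamma> 6 = \<gamma> 9 + \<gamma> 11 + \<gamma> 12" and
   h7: "\<gamma> 1 + \<gamma> 5 + \<gamma> 6 = \<gamma> 6 + \<gamma> 10 + \<gamma> 12"
    using g unfolding SR_iff by blast+
  have e: "\<gamma> = comb (\<gamma> 1) (\<gamma> 4) (\<gamma> 12) (\<gamma> 8) (\<gamma> 9 - 2 * \<gamma> 8)"
  proof
    fix j
    show "\<gamma> j = comb (\<gamma> 1) (\<gamma> 4) (\<gamma> 12) (\<gamma> 8) (\<gamma> 9 - 2 * \<gamma> 8) j"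
    proof (cases "j \<in> {1..12}")
      case True
      then have "j=1 \<or> j=2 \<or> j=3 \<or> j=4 \<or> j=5 \<or> j=6 \<or> j=7 \<or> j=8 \<or> j=9 \<or> j=10 \<or> j=11 \<or> j=12"
        by (simp only: atLeastAtMost_iff) presburger
      then show ?thesis using h1 h2 h3 h4 h5 h6 h7
        by (elim disjE; simp only: comb_val; simp; linarith)
    next
      case False
      then have "\<gamma> j = 0" using h0 by blast
      moreover have "comb k1 k2 k3 k4 k5 j = 0" for k1 k2 k3 k4 k5
        using False unfolding comb_val by auto
      ultimately show ?thesis by simp
    qed
  qed
  show "\<exists>k1 k2 k3 k4 k5. \<gamma> = comb k1 k2 k3 k4 k5 \<and>
            (\<forall>l1 l2 l3 l4 l5. \<gamma> = comb l1 l2 l3 l4 l5 \<longrightarrow>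
               l1 = k1 \<and> l2 = k2 \<and> l3 = k3 \<and> l4 = k4 \<and> l5 = k5)"
  proof (intro exI conjI allI impI)
    show "\<gamma> = comb (\<gamma> 1) (\<gamma> 4) (\<gamma> 12) (\<gamma> 8) (\<gamma> 9 - 2 * \<gamma> 8)" by (rule e)
    fix l1 l2 l3 l4 l5 assume c: "\<gamma> = comb l1 l2 l3 l4 l5"
    have v: "\<gamma> 1 = l1" "\<gamma> 4 = l2" "\<gamma> 12 = l3" "\<gamma> 8 = l4" "\<gamma> 9 = 2*l4+l5"
      by (simp_all add: c comb_val)
    show "l1 = \<gamma> 1" "l2 = \<gamma> 4" "l3 = \<gamma> 12" "l4 = \<gamma> 8" "l5 = \<gamma> 9 - 2 * \<gamma> 8"
      using v by auto
  qed
next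
  fix \<gamma> k1 k2 k3 k4 k5 assume g: "\<gamma> \<in> S_R G3V 12 G3ends" and c: "\<gamma> = comb k1 k2 k3 k4 k5"
  show "(\<gamma> \<in> S_N G3V 12 G3ends \<longleftrightarrow>
          k1 \<in> \<nat> \<and> k2 \<in> \<nat> \<and> k3 \<in> \<nat> \<and> k4 \<in> \<nat> \<and> k1 + k2 + k5 \<in> \<nat> \<and>
          k1 + k3 + k5 \<in> \<nat> \<and> k1 + k4 + k5 \<in> \<nat> \<and> k2 + k4 + k5 \<in> \<nat> \<and>
          k3 + k4 + k5 \<in> \<nat> \<and> 2 * k4 + k5 \<in> \<nat>)"
  proof -
    have "\<gamma> \<in> S_N G3V 12 G3ends \<longleftrightarrow> (\<forall>i\<in>{1..12}. \<gamma> i \<in> \<nat>)"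
      using g by (simp add: S_N_def)
    also have "\<dots> \<longleftrightarrow> \<gamma> 1 \<in> \<nat> \<and> \<gamma> 2 \<in> \<nat> \<and> \<gamma> 3 \<in> \<nat> \<and> \<gamma> 4 \<in> \<nat> \<and> \<gamma> 5 \<in> \<nat> \<and> \<gamma> 6 \<in> \<nat>
       \<and> \<gamma> 7 \<in> \<nat> \<and> \<gamma> 8 \<in> \<nat> \<and> \<gamma> 9 \<in> \<nat> \<and> \<gamma> 10 \<in> \<nat> \<and> \<gamma> 11 \<in> \<nat> \<and> \<gamma> 12 \<in> \<nat>"
      unfolding I12 by (simp only: ball_simps simp_thms)
    also have "\<dots> \<longleftrightarrow> k1 \<in> \<nat> \<and> k2 + k4 + k5 \<in> \<nat> \<and> k1 + k3 + k5 \<in> \<nat> \<and> k2 \<in> \<nat> \<and> k3 + k4 + k5 \<in> \<nat>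
       \<and> k2 + k4 + k5 \<in> \<nat> \<and> k3 + k4 + k5 \<in> \<nat> \<and> k4 \<in> \<nat> \<and> 2 * k4 + k5 \<in> \<nat> \<and> k1 + k4 + k5 \<in> \<nat>
       \<and> k1 + k2 + k5 \<in> \<nat> \<and> k3 \<in> \<nat>"
      unfolding c comb_val by simp
    finally have E: "\<gamma> \<in> S_N G3V 12 G3ends \<longleftrightarrow> k1 \<in> \<nat> \<and> k2 + k4 + k5 \<in> \<nat> \<and> k1 + k3 + k5 \<in> \<nat> \<and> k2 \<in> \<nat> \<and> k3 + k4 + k5 \<in> \<nat>
       \<and> k2 + k4 + k5 \<in> \<nat> \<and> k3 + k4 + k5 \<in> \<nat> \<and> k4 \<in> \<nat> \<and> 2 * k4 + k5 \<in> \<nat> \<and> k1 + k4 + k5 \<in> \<nat>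
       \<and> k1 + k2 + k5 \<in> \<nat> \<and> k3 \<in> \<nat>" .
    show ?thesis unfolding E by (rule iffI; elim conjE; intro conjI; assumption)
  qed
next
  fix \<gamma> k1 k2 k3 k4 k5 assume g: "\<gamma> \<in> S_N G3V 12 G3ends" and c: "\<gamma> = comb k1 k2 k3 k4 k5"
  have "\<gamma> 8 \<in> \<nat>" "\<gamma> 9 \<in> \<nat>" using g unfolding S_N_def by auto
  then have "k4 \<in> \<nat>" "2 * k4 + k5 \<in> \<nat>" by (simp_all add: c comb_val)
  then have "k4 \<in> \<int>" "2 * k4 + k5 \<in> \<int>" using Nats_subset_Ints by auto
  then have "(2 * k4 + k5) - 2 * k4 \<in> \<int>" by (intro Ints_diff Ints_mult) auto
  then show "k5 \<in> \<int>" by simp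
qed

end
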